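(* Let $\sigma$ be a confined position on the complete bipartite graph $K_{a,b}$ with sides $L$ ($|L|=a$) and $R$ ($|R|=b$). If $v,w\in L$ satisfy $\sigma(v)\le\sigma(w)$, then for all $t\ge 0$, $u_t(\sigma,v)\le u_t(\sigma,w)\le u_t(\sigma,v)+1$.
   Context: Parallel chip-firing game: on a graph $G$, a position $\sigma$ assigns a nonnegative integer $\sigma(v)$ to each vertex. Writing $\Phi_\sigma(v)$ for the number of neighbors $w$ of $v$ with $\sigma(w)\ge\deg(w)$, the step operator is $U\sigma(v)=\sigma(v)+\Phi_\sigma(v)$ if $\sigma(v)\le \deg(v)-1$ and $U\sigma(v)=\sigma(v)+\Phi_\sigma(v)-\deg(v)$ otherwise. A position is confined if every vertex satisfies $\Phi_\sigma(v)\le\sigma(v)\le\Phi_\sigma(v)+\deg(v)-1$. In $K_{a,b}$, every vertex of $L$ is adjacent exactly to all vertices of $R$ (degree $b$) and vice versa (degree $a$). $u_t(\sigma,v)=|\{s: 0\le s<t,\ U^s\sigma(v)\ge\deg(v)\}|$. *)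

theory Defs
  imports Main
begin

text \<open>A graph is given by a finite vertex set V and an adjacency relation E
(symmetric, irreflexive). Positions are functions vertex to nat (only values on V matter).\<close>

definition deg :: "'a set \<Rightarrow> ('a \<Rightarrow> 'a \<Rightarrow> bool) \<Rightarrow> 'a \<Rightarrow> nat" where
  "deg V E v = card {w \<in> V. E v w}"

definition Phi :: "'a set \<Rightarrow> ('a \<Rightarrow> 'a \<Rightarrow> bool) \<Rightarrow> ('a \<Rightarrow> nat) \<Rightarrow> 'a \<Rightarrow> nat" where
  "Phi V E \<sigma> v = card {w \<in> V. E v w \<and> \<sigma> w \<ge> deg V E w}"

definition step :: "'a set \<Rightarrow> ('a \<Rightarrow> 'a \<Rightarrow> bool) \<Rightarrow> ('a \<Rightarrow> nat) \<Rightarrow> ('a \<Rightarrow> nat)" where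
  "step V E \<sigma> = (\<lambda>v. if \<sigma> v + 1 \<le> deg V E v then \<sigma> v + Phi V E \<sigma> v
                       else \<sigma> v + Phi V E \<sigma> v - deg V E v)"

definition confined :: "'a set \<Rightarrow> ('a \<Rightarrow> 'a \<Rightarrow> bool) \<Rightarrow> ('a \<Rightarrow> nat) \<Rightarrow> bool" where
  "confined V E \<sigma> = (\<forall>v\<in>V. Phi V E \<sigma> v \<le> \<sigma> v \<and> \<sigma> v + 1 \<le> Phi V E \<sigma> v + deg V E v)"

definition fires :: "'a set \<Rightarrow> ('a \<Rightarrow> 'a \<Rightarrow> bool) \<Rightarrow> nat \<Rightarrow> ('a \<Rightarrow> nat) \<Rightarrow> 'a \<Rightarrow> nat" where
  "fires V E t \<sigma> v = card {s. s < t \<and> ((step V E) ^^ s) \<sigma> v \<ge> deg V E v}"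

definition Kab_adj :: "'a set \<Rightarrow> 'a set \<Rightarrow> 'a \<Rightarrow> 'a \<Rightarrow> bool" where
  "Kab_adj L R x y = ((x \<in> L \<and> y \<in> R) \<or> (x \<in> R \<and> y \<in> L))"

end

theory Submission
  imports Defs
begin

lemma fires_Suc:
  "fires V E (Suc t) \<sigma> x = fires V E t \<sigma> x + (if ((step V E) ^^ t) \<sigma> x \<ge> deg V E x then 1 else 0)"
proof -
  let ?P = "\<lambda>s. ((step V E) ^^ s) \<sigma> x \<ge> deg V E x"
  have e: "{s. s < Suc t \<and> ?P s} = {s. s < t \<and> ?P s} \<union> (if ?P t then {t} else {})"
    using less_Suc_eq by auto
  show ?thesis unfolding fires_def e by (auto simp: card_insert_if)
qed

theorem lemma3p1:
  fixes L R :: "'a set" and \<sigma> :: "'a \<Rightarrow> nat" and v w :: 'a and t :: nat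
  assumes "finite L" and "finite R" and "L \<inter> R = {}"
    and "confined (L \<union> R) (Kab_adj L R) \<sigma>"
    and "v \<in> L" and "w \<in> L" and "\<sigma> v \<le> \<sigma> w"
  shows "fires (L \<union> R) (Kab_adj L R) t \<sigma> v \<le> fires (L \<union> R) (Kab_adj L R) t \<sigma> w
       \<and> fires (L \<union> R) (Kab_adj L R) t \<sigma> w \<le> fires (L \<union> R) (Kab_adj L R) t \<sigma> v + 1"
proof -
  let ?V = "L \<union> R" and ?E = "Kab_adj L R"
  have degeq: "deg ?V ?E w = deg ?V ?E v"
  proof -
    have "\<And>x. x \<in> L \<Longrightarrow> {u \<in> ?V. ?E x u} = R"
      using assms(3) by (auto simp: Kab_adj_def)
    thus ?thesis unfolding deg_def using assms(5,6) by simp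
  qed
  have phieq: "\<And>\<tau>. Phi ?V ?E \<tau> w = Phi ?V ?E \<tau> v"
  proof -
    fix \<tau>
    have "\<And>x. x \<in> L \<Longrightarrow> {u \<in> ?V. ?E x u \<and> \<tau> u \<ge> deg ?V ?E u} = {u\<in>R. \<tau> u \<ge> deg ?V ?E u}"
      using assms(3) by (auto simp: Kab_adj_def)
    thus "Phi ?V ?E \<tau> w = Phi ?V ?E \<tau> v" unfolding Phi_def using assms(5,6) by simp
  qed
  define b where "b = deg ?V ?E v"
  define d where "d = \<sigma> w - \<sigma> v"
  have db: "d < b"
  proof -
    have "Phi ?V ?E \<sigma> v \<le> \<sigma> v" "\<sigma> w + 1 \<le> Phi ?V ?E \<sigma> w + deg ?V ?E w"
      using assms(4,5,6) unfolding confined_def by auto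
    thus ?thesis using phieq[of \<sigma>] degeq assms(7) unfolding d_def b_def by linarith
  qed
  define f where "f s = ((step ?V ?E) ^^ s) \<sigma>" for s
  define F where "F s x = fires ?V ?E s \<sigma> x" for s x
  have inv: "(F s w = F s v \<and> f s w = f s v + d) \<or> (F s w = F s v + 1 \<and> f s w + b = f s v + d)" for s
  proof (induction s)
    case 0
    then show ?case using assms(7) by (simp add: F_def f_def fires_def d_def)
  next
    case (Suc s)
    have Fs: "F (Suc s) x = F s x + (if f s x \<ge> deg ?V ?E x then 1 else 0)" for x
      unfolding F_def f_def by (rule fires_Suc)
    have fs: "f (Suc s) x = (if f s x + 1 \<le> deg ?V ?E x then f s x + Phi ?V ?E (f s) x
                       else f s x + Phi ?V ?E (f s) x - deg ?V ?E x)" for x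
      unfolding f_def by (simp add: step_def)
    have P: "Phi ?V ?E (f s) w = Phi ?V ?E (f s) v" by (rule phieq)
    show ?case using Suc.IH db unfolding Fs fs P degeq b_def[symmetric]
      by (auto split: if_splits)
  qed
  show ?thesis using inv[of t] unfolding F_def by auto
qed

end
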